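(* Let $(H,\lambda)$ be a friendly pair with associated rational map $\varphi:\mathbb{R}^{n+1}\dashrightarrow\mathbb{R}^{n+1}$, $\varphi_i(v)=\lambda_i\prod_{j=1}^m(\sum_{k=0}^n h_{jk}v_k)^{h_{ji}}$. If there exists a vector $u\in\mathbb{R}^{n+1}$ such that $\varphi(u)>0$ (all coordinates positive), then $\varphi(v)>0$ for all $v\in\mathbb{R}^{n+1}_{>0}$ at which $\varphi$ is defined.
   Context: A Horn matrix is an $m\times(n+1)$ integer matrix $H=(h_{ij})$ (rows $j=1,\dots,m$, columns $0,\dots,n$) whose columns sum to zero. $(H,\lambda)$ is a friendly pair if $H$ is a Horn matrix and $\lambda\in\mathbb{R}^{n+1}$ has all entries nonzero and satisfies $\sum_{i=0}^n\varphi_i(v)=1$ identically in $\mathbb{R}(v_0,\dots,v_n)$. *)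

theory Defs
  imports Complex_Main
begin

text \<open>A Horn matrix H is an m x (n+1) integer matrix with rows j = 1..m and
columns i = 0..n, represented as a function H j i (entries outside this range
are irrelevant).\<close>

definition horn_matrix :: "nat \<Rightarrow> nat \<Rightarrow> (nat \<Rightarrow> nat \<Rightarrow> int) \<Rightarrow> bool" where
  "horn_matrix m n H \<longleftrightarrow> (\<forall>i\<in>{0..n}. (\<Sum>j=1..m. H j i) = 0)"

definition lin_form :: "nat \<Rightarrow> (nat \<Rightarrow> nat \<Rightarrow> int) \<Rightarrow> nat \<Rightarrow> (nat \<Rightarrow> real) \<Rightarrow> real" where
  "lin_form n H j v = (\<Sum>k=0..n. of_int (H j k) * v k)"

definition horn_phi :: "nat \<Rightarrow> nat \<Rightarrow> (nat \<Rightarrow> nat \<Rightarrow> int) \<Rightarrow> (nat \<Rightarrow> real)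
    \<Rightarrow> (nat \<Rightarrow> real) \<Rightarrow> nat \<Rightarrow> real" where
  "horn_phi m n H lam v i = lam i * (\<Prod>j=1..m. (lin_form n H j v) powi (H j i))"

definition phi_defined :: "nat \<Rightarrow> nat \<Rightarrow> (nat \<Rightarrow> nat \<Rightarrow> int) \<Rightarrow> (nat \<Rightarrow> real) \<Rightarrow> bool" where
  "phi_defined m n H v \<longleftrightarrow>
     (\<forall>i\<in>{0..n}. \<forall>j\<in>{1..m}. H j i < 0 \<longrightarrow> lin_form n H j v \<noteq> 0)"

text \<open>This complement of a finite union of hyperplanes is Zariski dense, so an identity of
rational functions is the same as an identity of their evaluations at all generic points.\<close>
definition horn_generic :: "nat \<Rightarrow> nat \<Rightarrow> (nat \<Rightarrow> nat \<Rightarrow> int) \<Rightarrow> (nat \<Rightarrow> real) \<Rightarrow> bool" where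
  "horn_generic m n H v \<longleftrightarrow>
     (\<forall>j\<in>{1..m}. (\<exists>k\<in>{0..n}. H j k \<noteq> 0) \<longrightarrow> lin_form n H j v \<noteq> 0)"

definition friendly_pair :: "nat \<Rightarrow> nat \<Rightarrow> (nat \<Rightarrow> nat \<Rightarrow> int) \<Rightarrow> (nat \<Rightarrow> real) \<Rightarrow> bool" where
  "friendly_pair m n H lam \<longleftrightarrow>
     horn_matrix m n H \<and> (\<forall>i\<in>{0..n}. lam i \<noteq> 0) \<and>
     (\<forall>v. horn_generic m n H v \<longrightarrow> (\<Sum>i=0..n. horn_phi m n H lam v i) = 1)"

end

theory Submission
  imports Defs "HOL-Computational_Algebra.Polynomial"
begin

lemma lin_form_comb:
  "lin_form n H j (\<lambda>k. x k + s * y k) = lin_form n H j x + s * lin_form n H j y"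
  unfolding lin_form_def by (simp add: sum.distrib sum_distrib_left algebra_simps)

lemma phi_comb:
  "horn_phi m n H lam (\<lambda>k. x k + s * y k) i =
     lam i * (\<Prod>j=1..m. (lin_form n H j x + s * lin_form n H j y) powi H j i)"
  unfolding horn_phi_def lin_form_comb ..

lemma generic_zero_row:
  "horn_generic m n H w \<Longrightarrow> j \<in> {1..m} \<Longrightarrow> lin_form n H j w = 0 \<Longrightarrow> i \<in> {0..n} \<Longrightarrow> H j i = 0"
  unfolding horn_generic_def by force

lemma gen_near:
  assumes "horn_generic m n H w"
  shows "\<exists>\<delta>>0. \<forall>s. \<bar>s\<bar> < \<delta> \<longrightarrow> horn_generic m n H (\<lambda>k. w k + s * d k)"
proof -
  let ?N = "{j\<in>{1..m}. \<exists>k\<in>{0..n}. H j k \<noteq> 0}"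
  have "eventually (\<lambda>s. \<forall>j\<in>?N. lin_form n H j (\<lambda>k. w k + s * d k) \<noteq> 0) (at (0::real))"
  proof (rule eventually_ball_finite)
    show "finite ?N" by simp
    show "\<forall>j\<in>?N. eventually (\<lambda>s. lin_form n H j (\<lambda>k. w k + s * d k) \<noteq> 0) (at 0)"
    proof
      fix j assume j: "j \<in> ?N"
      have ne: "lin_form n H j w \<noteq> 0" using assms j unfolding horn_generic_def by auto
      have "((\<lambda>s. lin_form n H j w + s * lin_form n H j d) \<longlongrightarrow> lin_form n H j w + 0 * lin_form n H j d) (at 0)"
        by (intro tendsto_intros)
      hence "((\<lambda>s. lin_form n H j w + s * lin_form n H j d) \<longlongrightarrow> lin_form n H j w) (at 0)" by simp
      from tendsto_imp_eventually_ne[OF this ne]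
      show "eventually (\<lambda>s. lin_form n H j (\<lambda>k. w k + s * d k) \<noteq> 0) (at 0)"
        by (simp add: lin_form_comb)
    qed
  qed
  then obtain \<delta> where d: "\<delta>>0" "\<And>s. s \<noteq> 0 \<Longrightarrow> dist s 0 < \<delta> \<Longrightarrow> \<forall>j\<in>?N. lin_form n H j (\<lambda>k. w k + s * d k) \<noteq> 0"
    by (auto simp: eventually_at)
  show ?thesis
  proof (intro exI[of _ \<delta>] conjI allI impI)
    fix s :: real assume s: "\<bar>s\<bar> < \<delta>"
    show "horn_generic m n H (\<lambda>k. w k + s * d k)"
    proof (cases "s = 0")
      case True thus ?thesis using assms by simp
    next
      case False thus ?thesis using d(2)[of s] s unfolding horn_generic_def by auto
    qed
  qed (use d in auto)
qed

lemma phi_deriv: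
  assumes gen: "horn_generic m n H w" and i: "i \<in> {0..n}"
  shows "((\<lambda>s. horn_phi m n H lam (\<lambda>k. w k + s * d k) i) has_field_derivative
          horn_phi m n H lam w i * (\<Sum>j=1..m. of_int (H j i) * lin_form n H j d / lin_form n H j w)) (at 0)"
proof -
  define f where "f j s = (lin_form n H j w + s * lin_form n H j d) powi H j i" for j s
  have nz: "f j 0 \<noteq> 0" if "j \<in> {1..m}" for j
    using generic_zero_row[OF gen that _ i] by (cases "lin_form n H j w = 0") (auto simp: f_def)
  have der: "(f j has_field_derivative
      (of_int (H j i) * (lin_form n H j w + 0 * lin_form n H j d) powi (H j i - 1) * lin_form n H j d)) (at 0)"
    if "j \<in> {1..m}" for j
  proof -
    have a: "((\<lambda>s. lin_form n H j w + s * lin_form n H j d) has_field_derivative lin_form n H j d) (at 0)"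
      by (auto intro!: derivative_eq_intros)
    have b: "H j i \<ge> 0 \<or> lin_form n H j w + 0 * lin_form n H j d \<noteq> 0"
      using generic_zero_row[OF gen that _ i] by auto
    show ?thesis using DERIV_power_int[OF a b] unfolding f_def by simp
  qed
  from has_field_derivative_prod'[of "{1..m}" f 0, OF nz der]
  have P: "((\<lambda>s. \<Prod>j=1..m. f j s) has_field_derivative (\<Prod>j=1..m. f j 0) *
       (\<Sum>j=1..m. (of_int (H j i) * (lin_form n H j w + 0 * lin_form n H j d) powi (H j i - 1) * lin_form n H j d) / f j 0)) (at 0)"
    by simp
  have eqs: "(of_int (H j i) * (lin_form n H j w + 0 * lin_form n H j d) powi (H j i - 1) * lin_form n H j d) / f j 0
      = of_int (H j i) * lin_form n H j d / lin_form n H j w" if "j \<in> {1..m}" for j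
  proof (cases "lin_form n H j w = 0")
    case True thus ?thesis using generic_zero_row[OF gen that True i] by simp
  next
    case False thus ?thesis by (simp add: f_def power_int_diff field_simps)
  qed
  have "((\<lambda>s. lam i * (\<Prod>j=1..m. f j s)) has_field_derivative lam i * ((\<Prod>j=1..m. f j 0) *
       (\<Sum>j=1..m. of_int (H j i) * lin_form n H j d / lin_form n H j w))) (at 0)"
  proof -
    have S: "(\<Sum>j=1..m. (of_int (H j i) * (lin_form n H j w + 0 * lin_form n H j d) powi (H j i - 1) * lin_form n H j d) / f j 0)
       = (\<Sum>j=1..m. of_int (H j i) * lin_form n H j d / lin_form n H j w)"
      using eqs by (intro sum.cong) auto
    show ?thesis using DERIV_cmult[OF P, of "lam i"] unfolding S .
  qed
  thus ?thesis
    by (simp add: phi_comb f_def horn_phi_def mult_ac)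
qed


definition qv :: "nat \<Rightarrow> nat \<Rightarrow> (nat \<Rightarrow> nat \<Rightarrow> int) \<Rightarrow> (nat \<Rightarrow> real) \<Rightarrow> (nat \<Rightarrow> real) \<Rightarrow> nat \<Rightarrow> real" where
  "qv m n H lam w j = lin_form n H j (horn_phi m n H lam w) / lin_form n H j w"

lemma sum_phi_const:
  assumes fp: "friendly_pair m n H lam" and gen: "horn_generic m n H w"
  shows "\<exists>\<delta>>0. \<forall>y. \<bar>0 - y\<bar> < \<delta> \<longrightarrow>
     (\<Sum>i=0..n. horn_phi m n H lam (\<lambda>x. w x + 0 * d x) i) = (\<Sum>i=0..n. horn_phi m n H lam (\<lambda>x. w x + y * d x) i)"
proof -
  obtain \<delta> where \<delta>: "\<delta>>0" "\<forall>s. \<bar>s\<bar><\<delta> \<longrightarrow> horn_generic m n H (\<lambda>x. w x + s * d x)"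
    using gen_near[OF gen] by blast
  have "(\<Sum>i=0..n. horn_phi m n H lam (\<lambda>x. w x + y * d x) i) = 1" if "\<bar>y\<bar> < \<delta>" for y
    using fp \<delta>(2) that unfolding friendly_pair_def by blast
  moreover have "(\<Sum>i=0..n. horn_phi m n H lam (\<lambda>x. w x + 0 * d x) i) = 1"
    using fp gen unfolding friendly_pair_def by simp
  ultimately show ?thesis using \<delta>(1) by (intro exI[of _ \<delta>]) auto
qed

lemma D1:
  assumes fp: "friendly_pair m n H lam" and gen: "horn_generic m n H w" and k: "k \<in> {0..n}"
  shows "(\<Sum>j=1..m. of_int (H j k) * qv m n H lam w j) = 0"
proof -
  define e where "e = (\<lambda>x. if x = k then 1 else (0::real))"
  have le: "lin_form n H j e = of_int (H j k)" for j
    unfolding lin_form_def e_def using k by (simp add: if_distrib cong: if_cong)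
  let ?p = "horn_phi m n H lam w"
  let ?f = "\<lambda>s. \<Sum>i=0..n. horn_phi m n H lam (\<lambda>x. w x + s * e x) i"
  have D: "(?f has_field_derivative (\<Sum>i=0..n. ?p i * (\<Sum>j=1..m. of_int (H j i) * lin_form n H j e / lin_form n H j w))) (at 0)"
    by (rule DERIV_sum) (rule phi_deriv[OF gen], auto)
  obtain \<delta> where \<delta>: "\<delta>>0" "\<forall>y. \<bar>0 - y\<bar> < \<delta> \<longrightarrow> ?f 0 = ?f y"
    using sum_phi_const[OF fp gen, of e] by blast
  have z: "(\<Sum>i=0..n. ?p i * (\<Sum>j=1..m. of_int (H j i) * lin_form n H j e / lin_form n H j w)) = 0"
    using DERIV_local_const[OF D \<delta>(1)] \<delta>(2) by blast
  have "(\<Sum>i=0..n. ?p i * (\<Sum>j=1..m. of_int (H j i) * lin_form n H j e / lin_form n H j w))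
      = (\<Sum>i=0..n. \<Sum>j=1..m. of_int (H j k) * (of_int (H j i) * ?p i / lin_form n H j w))"
    by (simp add: le sum_distrib_left mult_ac)
  also have "\<dots> = (\<Sum>j=1..m. \<Sum>i=0..n. of_int (H j k) * (of_int (H j i) * ?p i / lin_form n H j w))"
    by (rule sum.swap)
  also have "\<dots> = (\<Sum>j=1..m. of_int (H j k) * qv m n H lam w j)"
    by (simp add: qv_def lin_form_def sum_distrib_left sum_divide_distrib)
  finally show ?thesis using z by simp
qed

lemma Dk:
  assumes fp: "friendly_pair m n H lam" and k1: "k \<ge> 1"
  shows "\<forall>w. horn_generic m n H w \<longrightarrow> (\<forall>i\<in>{0..n}. (\<Sum>j=1..m. of_int (H j i) * qv m n H lam w j ^ k) = 0)"
  using k1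
proof (induction k rule: nat_induct_at_least)
  case base
  then show ?case using D1[OF fp] by simp
next
  case (Suc k)
  show ?case
  proof (intro allI impI ballI)
    fix w i assume gen: "horn_generic m n H w" and i: "i \<in> {0..n}"
    define p where "p = horn_phi m n H lam w"
    define q where "q = qv m n H lam w"
    let ?g = "\<lambda>s. \<Sum>j=1..m. of_int (H j i) * qv m n H lam (\<lambda>x. w x + s * p x) j ^ k"
    obtain \<delta> where \<delta>: "\<delta>>0" "\<forall>s. \<bar>s\<bar><\<delta> \<longrightarrow> horn_generic m n H (\<lambda>x. w x + s * p x)"
      using gen_near[OF gen] by blast
    have const: "\<forall>y. \<bar>0 - y\<bar> < \<delta> \<longrightarrow> ?g 0 = ?g y"
    proof (intro allI impI)
      fix y :: real assume "\<bar>0 - y\<bar> < \<delta>"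
      hence "horn_generic m n H (\<lambda>x. w x + y * p x)" using \<delta> by simp
      hence "?g y = 0" using Suc.IH i by blast
      moreover have "?g 0 = 0" using Suc.IH i gen by simp
      ultimately show "?g 0 = ?g y" by simp
    qed
    have dphi0: "(\<Sum>j'=1..m. of_int (H j' i') * lin_form n H j' p / lin_form n H j' w) = 0"
      if "i' \<in> {0..n}" for i'
      using D1[OF fp gen that] by (simp add: qv_def p_def)
    have tder: "((\<lambda>s. of_int (H j i) * qv m n H lam (\<lambda>x. w x + s * p x) j ^ k) has_field_derivative
         (- real k * of_int (H j i) * q j ^ (Suc k))) (at 0)" if j: "j \<in> {1..m}" for j
    proof (cases "H j i = 0")
      case True thus ?thesis by simp
    next
      case False
      have lw: "lin_form n H j w \<noteq> 0" using generic_zero_row[OF gen j _ i] False by blast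
      define N where "N = (\<lambda>s. lin_form n H j (horn_phi m n H lam (\<lambda>x. w x + s * p x)))"
      define D where "D = (\<lambda>s. lin_form n H j w + s * lin_form n H j p)"
      have dN: "(N has_field_derivative 0) (at 0)"
      proof -
        have "(N has_field_derivative (\<Sum>i'=0..n. of_int (H j i') * (p i' *
            (\<Sum>j'=1..m. of_int (H j' i') * lin_form n H j' p / lin_form n H j' w)))) (at 0)"
          unfolding N_def lin_form_def[of n H j]
          by (intro DERIV_sum DERIV_cmult) (unfold p_def, rule phi_deriv[OF gen], auto)
        moreover have "(\<Sum>i'=0..n. of_int (H j i') * (p i' *
            (\<Sum>j'=1..m. of_int (H j' i') * lin_form n H j' p / lin_form n H j' w))) = 0"
          using dphi0 by simp
        ultimately show ?thesis by simp
      qed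
      have dD: "(D has_field_derivative lin_form n H j p) (at 0)"
        unfolding D_def by (auto intro!: derivative_eq_intros)
      have N0: "N 0 = lin_form n H j p" unfolding N_def p_def by simp
      have D0: "D 0 = lin_form n H j w" unfolding D_def by simp
      have funeq: "(\<lambda>s. of_int (H j i) * qv m n H lam (\<lambda>x. w x + s * p x) j ^ k) =
          (\<lambda>s. of_int (H j i) * (N s / D s) ^ k)"
        by (simp add: qv_def N_def D_def lin_form_comb)
      have "((\<lambda>s. of_int (H j i) * (N s / D s) ^ k) has_field_derivative
          of_int (H j i) * (real k * (N 0 / D 0) ^ (k - Suc 0) * ((0 * D 0 - N 0 * lin_form n H j p) / (D 0 * D 0)))) (at 0)"
      proof -
        have A: "((\<lambda>s. N s / D s) has_field_derivative ((0 * D 0 - N 0 * lin_form n H j p) / (D 0 * D 0))) (at 0)"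
          by (rule DERIV_divide[OF dN dD]) (simp add: D0 lw)
        show ?thesis using DERIV_cmult[OF DERIV_power[OF A, of k], of "of_int (H j i)"] by (simp add: mult_ac)
      qed
      moreover have "of_int (H j i) * (real k * (N 0 / D 0) ^ (k - Suc 0) * ((0 * D 0 - N 0 * lin_form n H j p) / (D 0 * D 0)))
          = - real k * of_int (H j i) * q j ^ (Suc k)"
      proof -
        obtain k' where k': "k = Suc k'" using Suc.hyps by (cases k) auto
        show ?thesis unfolding N0 D0 q_def qv_def p_def k'
          by (simp add: power_divide field_simps lw)
      qed
      ultimately show ?thesis unfolding funeq by simp
    qed
    have D: "(?g has_field_derivative (\<Sum>j=1..m. - real k * of_int (H j i) * q j ^ (Suc k))) (at 0)"
      by (rule DERIV_sum) (rule tder, simp)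
    have "(\<Sum>j=1..m. - real k * of_int (H j i) * q j ^ (Suc k)) = 0"
      using DERIV_local_const[OF D \<delta>(1) const] .
    hence "- real k * (\<Sum>j=1..m. of_int (H j i) * q j ^ (Suc k)) = 0"
      by (simp add: sum_distrib_left mult_ac)
    thus "(\<Sum>j=1..m. of_int (H j i) * qv m n H lam w j ^ Suc k) = 0"
      using Suc.hyps by (simp add: q_def)
  qed
qed

lemma all_powers:
  assumes fp: "friendly_pair m n H lam" and gen: "horn_generic m n H w" and i: "i \<in> {0..n}"
  shows "(\<Sum>j=1..m. of_int (H j i) * qv m n H lam w j ^ k) = 0"
proof (cases "k = 0")
  case True
  have "(\<Sum>j=1..m. H j i) = 0" using fp i unfolding friendly_pair_def horn_matrix_def by blast
  hence "(\<Sum>j=1..m. (of_int (H j i)::real)) = 0" by (metis of_int_0 of_int_sum)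
  thus ?thesis using True by simp
next
  case False thus ?thesis using Dk[OF fp, of k] gen i by simp
qed

lemma classes:
  assumes fp: "friendly_pair m n H lam" and gen: "horn_generic m n H w" and i: "i \<in> {0..n}"
  shows "(\<Sum>j\<in>{j\<in>{1..m}. qv m n H lam w j = \<alpha>}. of_int (H j i)) = (0::real)"
proof -
  define q where "q = qv m n H lam w"
  define B where "B = q ` {1..m} - {\<alpha>}"
  define g where "g = (\<Prod>\<beta>\<in>B. [:-\<beta>, 1:])"
  define c where "c = (\<Prod>\<beta>\<in>B. \<alpha> - \<beta>)"
  have finB: "finite B" unfolding B_def by simp
  have c0: "c \<noteq> 0" unfolding c_def using finB by (simp add: B_def)
  have pg: "poly g x = (\<Prod>\<beta>\<in>B. x - \<beta>)" for x unfolding g_def by (simp add: poly_prod)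
  have "(\<Sum>j=1..m. of_int (H j i) * poly g (q j)) =
      (\<Sum>j=1..m. \<Sum>t\<le>degree g. coeff g t * (of_int (H j i) * q j ^ t))"
    by (simp add: poly_altdef sum_distrib_left mult_ac)
  also have "\<dots> = (\<Sum>t\<le>degree g. coeff g t * (\<Sum>j=1..m. of_int (H j i) * q j ^ t))"
    by (subst sum.swap) (simp add: sum_distrib_left)
  also have "\<dots> = 0" using all_powers[OF fp gen i] by (simp add: q_def)
  finally have z: "(\<Sum>j=1..m. of_int (H j i) * poly g (q j)) = 0" .
  have pv: "poly g (q j) = (if q j = \<alpha> then c else 0)" if "j \<in> {1..m}" for j
  proof (cases "q j = \<alpha>")
    case True thus ?thesis by (simp add: pg c_def)
  next
    case False
    hence "q j \<in> B" using that by (simp add: B_def)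
    thus ?thesis using False finB by (simp add: pg)
  qed
  have "(\<Sum>j=1..m. of_int (H j i) * poly g (q j)) = (\<Sum>j=1..m. if q j = \<alpha> then c * of_int (H j i) else 0)"
    using pv by (intro sum.cong) auto
  also have "\<dots> = c * (\<Sum>j\<in>{j\<in>{1..m}. q j = \<alpha>}. of_int (H j i))"
    by (simp add: sum.If_cases sum_distrib_left Int_def conj_commute)
  finally show ?thesis using z c0 by (simp add: q_def)
qed


lemma power_int_sum':
  "(x::real) \<noteq> 0 \<Longrightarrow> x powi (\<Sum>j\<in>A. f j) = (\<Prod>j\<in>A. x powi f j)"
  by (induction A rule: infinite_finite_induct) (auto simp: power_int_add)

lemma pos_interval_avoid:
  fixes Bad :: "real set"
  assumes "finite Bad" "a < b"
  shows "\<exists>s. a < s \<and> s < b \<and> s \<notin> Bad"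
proof -
  have "infinite {a<..<b}" using assms(2) by simp
  hence "{a<..<b} - Bad \<noteq> {}" using assms(1)
    by (metis Diff_empty Diff_eq_empty_iff finite_Diff2 finite_subset)
  thus ?thesis by auto
qed

lemma segment:
  assumes fp: "friendly_pair m n H lam"
    and gen0: "horn_generic m n H w0" and pos0: "\<forall>k\<in>{0..n}. w0 k > 0"
    and phi0: "\<forall>i\<in>{0..n}. horn_phi m n H lam w0 i > 0"
    and gen1: "horn_generic m n H v" and pos1: "\<forall>k\<in>{0..n}. v k > 0"
  shows "\<forall>i\<in>{0..n}. horn_phi m n H lam v i > 0"
proof -
  define d where "d = (\<lambda>k. v k - w0 k)"
  define w where "w = (\<lambda>t k. w0 k + t * d k)"
  define a where "a = (\<lambda>j. lin_form n H j w0)"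
  define b where "b = (\<lambda>j. lin_form n H j d)"
  define Nz where "Nz = {j\<in>{1..m}. \<exists>k\<in>{0..n}. H j k \<noteq> 0}"
  define Bad where "Bad = {t. \<exists>j\<in>Nz. a j + t * b j = 0}"
  define phiw where "phiw = (\<lambda>t i. horn_phi m n H lam (w t) i)"
  have lw: "lin_form n H j (w t) = a j + t * b j" for j t
    unfolding w_def a_def b_def by (rule lin_form_comb)
  have phiw_eq: "phiw t i = lam i * (\<Prod>j=1..m. (a j + t * b j) powi H j i)" for t i
    unfolding phiw_def w_def a_def b_def by (rule phi_comb)
  have w0eq: "w 0 = w0" unfolding w_def by simp
  have w1eq: "w 1 = v" unfolding w_def d_def by simp
  have aNz: "a j \<noteq> 0" if "j \<in> Nz" for j
    using gen0 that unfolding horn_generic_def Nz_def a_def by blast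
  have finBad: "finite Bad"
  proof (rule finite_subset)
    show "Bad \<subseteq> (\<lambda>j. - a j / b j) ` Nz"
    proof
      fix t assume "t \<in> Bad"
      then obtain j where j: "j \<in> Nz" "a j + t * b j = 0" unfolding Bad_def by blast
      hence "b j \<noteq> 0" using aNz[OF j(1)] by auto
      hence "t = - a j / b j" using j(2) by (simp add: field_simps)
      thus "t \<in> (\<lambda>j. - a j / b j) ` Nz" using j(1) by blast
    qed
  qed (simp add: Nz_def)
  have genw: "horn_generic m n H (w t)" if "t \<notin> Bad" for t
    using that unfolding horn_generic_def Bad_def Nz_def lw by blast
  have posw: "w t k > 0" if "t \<in> {0..1}" "k \<in> {0..n}" for t k
  proof -
    have "w t k = (1 - t) * w0 k + t * v k" unfolding w_def d_def by (simp add: algebra_simps)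
    moreover have "(1 - t) * w0 k \<ge> 0" using that pos0 by (intro mult_nonneg_nonneg) (auto simp: less_imp_le)
    moreover have "t * v k \<ge> 0" using that pos1 by (intro mult_nonneg_nonneg) (auto simp: less_imp_le)
    moreover have "(1 - t) * w0 k > 0 \<or> t * v k > 0" using that pos0 pos1
      by (cases "t = 1") auto
    ultimately show ?thesis by linarith
  qed
  have sum1: "(\<Sum>i=0..n. phiw t i) = 1" if "t \<notin> Bad" for t
    using fp genw[OF that] unfolding friendly_pair_def phiw_def by blast
  have le1: "phiw t i \<le> 1" if "t \<notin> Bad" "i \<in> {0..n}" "\<forall>i\<in>{0..n}. phiw t i > 0" for t i
  proof -
    have "phiw t i \<le> (\<Sum>i=0..n. phiw t i)"
      using that by (intro member_le_sum) (auto simp: less_imp_le)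
    thus ?thesis using sum1[OF that(1)] by simp
  qed
  define good where "good = (\<lambda>t. \<forall>s\<in>{0..t}. s \<notin> Bad \<longrightarrow> (\<forall>i\<in>{0..n}. phiw s i > 0))"
  define S where "S = {t\<in>{0..1}. good t}"
  define t1 where "t1 = Sup S"
  have S0: "0 \<in> S" unfolding S_def good_def phiw_def using phi0 w0eq by auto
  have Sbdd: "bdd_above S" unfolding S_def by (rule bdd_aboveI[of _ 1]) auto
  have t1ge: "0 \<le> t1" unfolding t1_def using S0 Sbdd by (meson cSup_upper)
  have t1le: "t1 \<le> 1" unfolding t1_def by (rule cSup_least) (use S0 in blast, auto simp: S_def)
  have left: "\<forall>i\<in>{0..n}. phiw s i > 0" if hs: "0 \<le> s" "s < t1" "s \<notin> Bad" for s
  proof -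
    obtain x where "x \<in> S" "s < x" using hs(2) S0 unfolding t1_def by (metis less_cSupD empty_iff)
    thus ?thesis using hs unfolding S_def good_def by auto
  qed
  define J0 where "J0 = {j\<in>{1..m}. a j + t1 * b j = 0}"
  define E where "E = (\<lambda>i. \<Sum>j\<in>J0. H j i)"
  define D where "D = (\<lambda>i t. lam i * (\<Prod>j\<in>J0. b j powi H j i) * (\<Prod>j\<in>{1..m}-J0. (a j + t * b j) powi H j i))"
  have J0sub: "J0 \<subseteq> {1..m}" unfolding J0_def by auto
  have finJ0: "finite J0" using J0sub finite_subset by blast
  have splitp: "(\<Prod>j=1..m. f j) = (\<Prod>j\<in>J0. f j) * (\<Prod>j\<in>{1..m}-J0. f j)" for f :: "nat \<Rightarrow> real"
    using prod.subset_diff[OF J0sub] by (simp add: mult_ac)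
  have factor: "phiw t i = D i t * (t - t1) powi E i" if "t \<noteq> t1" for t i
  proof -
    have "(\<Prod>j\<in>J0. (a j + t * b j) powi H j i) = (\<Prod>j\<in>J0. b j powi H j i * (t - t1) powi H j i)"
    proof (intro prod.cong refl)
      fix j assume "j \<in> J0"
      hence "a j + t * b j = b j * (t - t1)" unfolding J0_def by (simp add: algebra_simps)
      thus "(a j + t * b j) powi H j i = b j powi H j i * (t - t1) powi H j i"
        by (simp add: power_int_mult_distrib)
    qed
    also have "\<dots> = (\<Prod>j\<in>J0. b j powi H j i) * (t - t1) powi E i"
      unfolding E_def using that by (simp add: prod.distrib power_int_sum')
    finally show ?thesis unfolding phiw_eq D_def by (subst splitp) (simp add: mult_ac)
  qed
  have factor0: "phiw t i = D i t" if "\<forall>j\<in>J0. H j i = 0" for t i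
  proof -
    have "(\<Prod>j\<in>J0. (a j + t * b j) powi H j i) = 1" using that by simp
    moreover have "(\<Prod>j\<in>J0. b j powi H j i) = 1" using that by simp
    ultimately show ?thesis unfolding phiw_eq D_def by (subst splitp) simp
  qed
  have Dlim: "(D i \<longlongrightarrow> D i t1) (at t1)" for i
    unfolding D_def
    by (intro tendsto_intros) (auto simp: J0_def)
  have Dnz: "D i t1 \<noteq> 0" if i: "i \<in> {0..n}" for i
  proof -
    have "lam i \<noteq> 0" using fp i unfolding friendly_pair_def by blast
    moreover have "b j powi H j i \<noteq> 0" if "j \<in> J0" for j
    proof (cases "H j i = 0")
      case False
      hence "j \<in> Nz" using that i unfolding Nz_def J0_def by auto
      hence "b j \<noteq> 0" using aNz that unfolding J0_def by auto
      thus ?thesis by simp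
    qed simp
    moreover have "(a j + t1 * b j) powi H j i \<noteq> 0" if "j \<in> {1..m}-J0" for j
      using that unfolding J0_def by simp
    ultimately show ?thesis unfolding D_def using finJ0 by (simp add: prod_zero_iff)
  qed
  have Ew: "(\<Sum>i=0..n. of_int (E i) * w t1 i) = 0"
  proof -
    have "(\<Sum>i=0..n. of_int (E i) * w t1 i) = (\<Sum>j\<in>J0. \<Sum>i=0..n. of_int (H j i) * w t1 i)"
      unfolding E_def by (simp add: sum_distrib_right sum.swap[of _ J0])
    also have "\<dots> = (\<Sum>j\<in>J0. a j + t1 * b j)" by (simp add: lw[symmetric] lin_form_def)
    also have "\<dots> = 0" unfolding J0_def by simp
    finally show ?thesis .
  qed
  have key: "\<forall>i\<in>{0..n}. E i = 0 \<and> D i t1 > 0"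
  proof (cases "t1 = 0")
    case True
    have zr: "\<forall>j\<in>J0. H j i = 0" if "i \<in> {0..n}" for i
    proof
      fix j assume j: "j \<in> J0"
      show "H j i = 0"
      proof (rule ccontr)
        assume "H j i \<noteq> 0"
        hence "j \<in> Nz" using j that unfolding Nz_def J0_def by auto
        thus False using aNz j True unfolding J0_def by auto
      qed
    qed
    show ?thesis
    proof
      fix i assume i: "i \<in> {0..n}"
      have "E i = 0" unfolding E_def using zr[OF i] by simp
      moreover have "D i t1 = phiw 0 i" using factor0[of i 0] zr[OF i] True by simp
      moreover have "phiw 0 i > 0" using phi0 i w0eq unfolding phiw_def by simp
      ultimately show "E i = 0 \<and> D i t1 > 0" by simp
    qed
  next
    case False
    hence t1pos: "t1 > 0" using t1ge by simp
    have Ege: "E i \<ge> 0" if i: "i \<in> {0..n}" for i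
    proof (rule ccontr)
      assume "\<not> E i \<ge> 0"
      hence Eneg: "E i \<le> -1" by simp
      define c where "c = \<bar>D i t1\<bar> / 2"
      have c: "c > 0" using Dnz[OF i] unfolding c_def by simp
      have "((\<lambda>t. \<bar>D i t\<bar>) \<longlongrightarrow> \<bar>D i t1\<bar>) (at t1)" by (intro tendsto_intros Dlim)
      hence "eventually (\<lambda>t. \<bar>D i t\<bar> > c) (at t1)"
        by (rule order_tendstoD(1)) (use c in \<open>simp add: c_def\<close>)
      then obtain \<delta> where \<delta>: "\<delta> > 0" "\<And>t. t \<noteq> t1 \<Longrightarrow> dist t t1 < \<delta> \<Longrightarrow> \<bar>D i t\<bar> > c"
        by (auto simp: eventually_at)
      define r0 where "r0 = min (min \<delta> c) (min 1 t1)"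
      have r0: "r0 > 0" using \<delta> c t1pos unfolding r0_def by simp
      obtain s where s: "t1 - r0 < s" "s < t1" "s \<notin> Bad" using pos_interval_avoid[OF finBad, of "t1 - r0" t1] r0 by auto
      have s0: "0 \<le> s" using s r0_def by simp
      have pp: "\<forall>i\<in>{0..n}. phiw s i > 0" using left[OF s0 s(2) s(3)] .
      have ple: "phiw s i \<le> 1" using le1[OF s(3) i pp] .
      define r where "r = \<bar>s - t1\<bar>"
      have r: "0 < r" "r < c" "r < 1" "r < \<delta>" using s unfolding r_def r0_def by auto
      have Ds: "\<bar>D i s\<bar> > c" using \<delta>(2)[of s] s r unfolding r_def by (simp add: dist_real_def)
      have "r powi E i \<ge> r powi (-1)"
        using r by (intro power_int_decreasing Eneg) auto
      hence rp: "r powi E i \<ge> 1 / r" by (simp add: power_int_minus divide_inverse)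
      have "1 / r > 1 / c" using r by (simp add: frac_less2)
      have A: "\<bar>phiw s i\<bar> = \<bar>D i s\<bar> * r powi E i"
        using factor[of s i] s(2) unfolding r_def by (simp add: abs_mult power_int_abs)
      have B: "\<bar>D i s\<bar> * r powi E i \<ge> c * (1 / r)"
        using Ds rp c r by (intro mult_mono) auto
      have C: "c * (1 / r) > 1" using r c by (simp add: field_simps)
      have "\<bar>phiw s i\<bar> > 1" using A B C by linarith
      moreover have "phiw s i > 0" using pp i by blast
      ultimately show False using ple by simp
    qed
    have Ezero: "E i = 0" if i: "i \<in> {0..n}" for i
    proof -
      have "(\<Sum>i=0..n. of_int (E i) * w t1 i) = 0" by (rule Ew)
      moreover have "\<forall>i\<in>{0..n}. of_int (E i) * w t1 i \<ge> 0"
        using Ege posw t1ge t1le by (simp add: less_imp_le)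
      ultimately have "of_int (E i) * w t1 i = 0"
        using sum_nonneg_eq_0_iff[of "{0..n}" "\<lambda>i. of_int (E i) * w t1 i"] i by simp
      thus ?thesis using posw[of t1 i] t1ge t1le i by simp
    qed
    show ?thesis
    proof
      fix i assume i: "i \<in> {0..n}"
      have Dpos: "D i t1 > 0"
      proof (rule ccontr)
        assume "\<not> D i t1 > 0"
        hence neg: "D i t1 < 0" using Dnz[OF i] by simp
        hence "eventually (\<lambda>t. D i t < 0) (at t1)"
          by (rule order_tendstoD(2)[OF Dlim])
        then obtain \<delta> where \<delta>: "\<delta> > 0" "\<And>t. t \<noteq> t1 \<Longrightarrow> dist t t1 < \<delta> \<Longrightarrow> D i t < 0"
          by (auto simp: eventually_at)
        obtain s where s: "t1 - min \<delta> t1 < s" "s < t1" "s \<notin> Bad"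
          using pos_interval_avoid[OF finBad, of "t1 - min \<delta> t1" t1] \<delta> t1pos by auto
        have s0: "0 \<le> s" using s by simp
        have "phiw s i > 0" using left[OF s0 s(2) s(3)] i by blast
        moreover have "phiw s i = D i s" using factor[of s i] s(2) Ezero[OF i] by simp
        moreover have "D i s < 0" using \<delta>(2)[of s] s by (simp add: dist_real_def)
        ultimately show False by simp
      qed
      show "E i = 0 \<and> D i t1 > 0" using Dpos Ezero[OF i] by simp
    qed
  qed
  have "eventually (\<lambda>t. \<forall>i\<in>{0..n}. D i t > 0) (at t1)"
    using key by (intro eventually_ball_finite) (auto intro: order_tendstoD(1)[OF Dlim])
  then obtain \<delta> where \<delta>: "\<delta> > 0" "\<And>t. t \<noteq> t1 \<Longrightarrow> dist t t1 < \<delta> \<Longrightarrow> \<forall>i\<in>{0..n}. D i t > 0"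
    by (auto simp: eventually_at)
  have near: "\<forall>i\<in>{0..n}. phiw t i > 0" if "\<bar>t - t1\<bar> < \<delta>" "t \<notin> Bad" for t
  proof
    fix i assume i: "i \<in> {0..n}"
    show "phiw t i > 0"
    proof (cases "t = t1")
      case False
      thus ?thesis using factor[of t i] key i \<delta>(2)[of t] that by (simp add: dist_real_def)
    next
      case True
      have "\<forall>j\<in>J0. H j i = 0"
      proof
        fix j assume j: "j \<in> J0"
        show "H j i = 0"
        proof (rule ccontr)
          assume "H j i \<noteq> 0"
          hence "j \<in> Nz" using j i unfolding Nz_def J0_def by auto
          thus False using j True that(2) unfolding J0_def Bad_def by auto
        qed
      qed
      thus ?thesis using factor0[of i t] key i True by simp
    qed
  qed
  define t2 where "t2 = min 1 (t1 + \<delta> / 2)"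
  have "good t2"
    unfolding good_def
  proof (rule ballI, rule impI)
    fix s assume s: "s \<in> {0..t2}" "s \<notin> Bad"
    show "\<forall>i\<in>{0..n}. phiw s i > 0"
    proof (cases "s < t1")
      case True thus ?thesis using left s by auto
    next
      case False
      hence "\<bar>s - t1\<bar> < \<delta>" using s \<delta>(1) unfolding t2_def by auto
      thus ?thesis using near s by auto
    qed
  qed
  hence "t2 \<in> S" unfolding S_def t2_def using t1ge \<delta>(1) by auto
  hence "t2 \<le> t1" unfolding t1_def using Sbdd by (rule cSup_upper)
  hence t2eq: "t2 = 1" and "t1 = 1" unfolding t2_def using \<delta>(1) t1le by auto
  have "good 1" using \<open>good t2\<close> t2eq by simp
  moreover have "1 \<notin> Bad"
  proof
    assume "1 \<in> Bad"
    then obtain j where j: "j \<in> Nz" "a j + 1 * b j = 0" unfolding Bad_def by blast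
    hence "lin_form n H j v = 0" using lw[of j 1] w1eq by simp
    thus False using gen1 j(1) unfolding horn_generic_def Nz_def by blast
  qed
  ultimately have "\<forall>i\<in>{0..n}. phiw 1 i > 0" unfolding good_def by auto
  thus ?thesis unfolding phiw_def w1eq .
qed


lemma gen_from_u:
  assumes def: "phi_defined m n H u" and pos: "\<forall>i\<in>{0..n}. horn_phi m n H lam u i > 0"
  shows "horn_generic m n H u"
  unfolding horn_generic_def
proof (intro ballI impI)
  fix j assume j: "j \<in> {1..m}" and "\<exists>k\<in>{0..n}. H j k \<noteq> 0"
  then obtain k where k: "k \<in> {0..n}" "H j k \<noteq> 0" by blast
  show "lin_form n H j u \<noteq> 0"
  proof (cases "\<exists>i\<in>{0..n}. H j i < 0")
    case True thus ?thesis using def j unfolding phi_defined_def by blast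
  next
    case False
    hence hk: "H j k > 0" using k by force
    show ?thesis
    proof
      assume z: "lin_form n H j u = 0"
      have "(\<Prod>j'=1..m. lin_form n H j' u powi H j' k) = 0"
        using j z hk by (intro prod_zero) (auto intro!: bexI[of _ j])
      hence "horn_phi m n H lam u k = 0" unfolding horn_phi_def by simp
      thus False using pos k by force
    qed
  qed
qed

lemma gen_from_v:
  assumes pos: "\<forall>i\<in>{0..n}. v i > 0" and def: "phi_defined m n H v"
  shows "horn_generic m n H v"
  unfolding horn_generic_def
proof (intro ballI impI)
  fix j assume j: "j \<in> {1..m}" and "\<exists>k\<in>{0..n}. H j k \<noteq> 0"
  then obtain k where k: "k \<in> {0..n}" "H j k \<noteq> 0" by blast
  show "lin_form n H j v \<noteq> 0"
  proof (cases "\<exists>i\<in>{0..n}. H j i < 0")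
    case True thus ?thesis using def j unfolding phi_defined_def by blast
  next
    case False
    hence nn: "\<forall>i\<in>{0..n}. of_int (H j i) * v i \<ge> 0" using pos
      by (simp add: less_imp_le not_less)
    have hk: "H j k > 0" using k False by force
    have "0 < of_int (H j k) * v k" using hk pos k by simp
    also have "\<dots> \<le> lin_form n H j v"
      unfolding lin_form_def using nn k by (intro member_le_sum) auto
    finally show ?thesis by simp
  qed
qed

theorem lemma4p2:
  fixes m n :: nat and H :: "nat \<Rightarrow> nat \<Rightarrow> int" and lam :: "nat \<Rightarrow> real"
  assumes "friendly_pair m n H lam"
    and "\<exists>u. phi_defined m n H u \<and> (\<forall>i\<in>{0..n}. horn_phi m n H lam u i > 0)"
  shows "\<forall>v. (\<forall>i\<in>{0..n}. v i > 0) \<and> phi_defined m n H v \<longrightarrow>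
           (\<forall>i\<in>{0..n}. horn_phi m n H lam v i > 0)"
proof (intro allI impI)
  fix v assume hv: "(\<forall>i\<in>{0..n}. v i > 0) \<and> phi_defined m n H v"
  note fp = assms(1)
  obtain u where u: "phi_defined m n H u" "\<forall>i\<in>{0..n}. horn_phi m n H lam u i > 0" using assms(2) by blast
  have genu: "horn_generic m n H u" by (rule gen_from_u[OF u])
  have genv: "horn_generic m n H v" using gen_from_v hv by blast
  define p where "p = horn_phi m n H lam u"
  define q where "q = qv m n H lam u"
  have ppos: "p k > 0" if "k \<in> {0..n}" for k using u(2) that unfolding p_def by blast
  have lp: "lin_form n H j p = q j * lin_form n H j u" if j: "j \<in> {1..m}" for j
  proof (cases "lin_form n H j u = 0")
    case True
    hence "\<forall>k\<in>{0..n}. H j k = 0" using genu j unfolding horn_generic_def by blast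
    hence "lin_form n H j p = 0" unfolding lin_form_def by simp
    thus ?thesis using True by simp
  next
    case False thus ?thesis unfolding q_def qv_def p_def by simp
  qed
  define T where "T = 1 + (\<Sum>k=0..n. \<bar>u k\<bar> / p k) + (\<Sum>j=1..m. \<bar>inverse (q j)\<bar>)"
  have s1: "(\<Sum>k=0..n. \<bar>u k\<bar> / p k) \<ge> 0" using ppos by (intro sum_nonneg) (simp add: less_imp_le)
  have s2: "(\<Sum>j=1..m. \<bar>inverse (q j)\<bar>) \<ge> 0" by (intro sum_nonneg) simp
  have Tpos: "T > 0" unfolding T_def using s1 s2 by linarith
  have Tu: "T > \<bar>u k\<bar> / p k" if k: "k \<in> {0..n}" for k
  proof -
    have "\<bar>u k\<bar> / p k \<le> (\<Sum>k=0..n. \<bar>u k\<bar> / p k)" using ppos k by (intro member_le_sum) (auto simp: less_imp_le)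
    thus ?thesis unfolding T_def using s2 by linarith
  qed
  have Tq: "T > \<bar>inverse (q j)\<bar>" if j: "j \<in> {1..m}" for j
  proof -
    have "\<bar>inverse (q j)\<bar> \<le> (\<Sum>j=1..m. \<bar>inverse (q j)\<bar>)" using j by (intro member_le_sum) auto
    thus ?thesis unfolding T_def using s1 by linarith
  qed
  have nz: "1 + T * q j \<noteq> 0" if j: "j \<in> {1..m}" for j
  proof (cases "q j = 0")
    case False
    have a: "\<bar>q j\<bar> > 0" using False by simp
    have "T * \<bar>q j\<bar> > inverse \<bar>q j\<bar> * \<bar>q j\<bar>"
      using Tq[OF j] a by (intro mult_strict_right_mono) (auto simp: abs_inverse)
    hence "T * \<bar>q j\<bar> > 1" using a by simp
    hence "\<bar>T * q j\<bar> > 1" using Tpos by (simp add: abs_mult)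
    thus ?thesis by auto
  qed simp
  define ws where "ws = (\<lambda>k. u k + T * p k)"
  have wspos: "\<forall>k\<in>{0..n}. ws k > 0"
  proof
    fix k assume k: "k \<in> {0..n}"
    have "T * p k > \<bar>u k\<bar>" using Tu[OF k] ppos[OF k] by (simp add: field_simps)
    thus "ws k > 0" unfolding ws_def by linarith
  qed
  have lws: "lin_form n H j ws = lin_form n H j u * (1 + T * q j)" if "j \<in> {1..m}" for j
    unfolding ws_def lin_form_comb lp[OF that] by (simp add: algebra_simps)
  have genws: "horn_generic m n H ws"
    unfolding horn_generic_def
  proof (intro ballI impI)
    fix j assume j: "j \<in> {1..m}" and "\<exists>k\<in>{0..n}. H j k \<noteq> 0"
    hence "lin_form n H j u \<noteq> 0" using genu unfolding horn_generic_def by blast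
    thus "lin_form n H j ws \<noteq> 0" using lws[OF j] nz[OF j] by simp
  qed
  have phiws: "horn_phi m n H lam ws i > 0" if i: "i \<in> {0..n}" for i
  proof -
    have "horn_phi m n H lam ws i = lam i * (\<Prod>j=1..m. lin_form n H j u powi H j i * (1 + T * q j) powi H j i)"
      unfolding horn_phi_def using lws by (simp add: power_int_mult_distrib)
    also have "\<dots> = horn_phi m n H lam u i * (\<Prod>j=1..m. (1 + T * q j) powi H j i)"
      unfolding horn_phi_def by (simp add: prod.distrib mult_ac)
    also have "(\<Prod>j=1..m. (1 + T * q j) powi H j i) = 1"
    proof -
      have "(\<Prod>j=1..m. (1 + T * q j) powi H j i) =
          (\<Prod>\<alpha>\<in>q ` {1..m}. \<Prod>j\<in>{j\<in>{1..m}. q j = \<alpha>}. (1 + T * q j) powi H j i)"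
        by (rule prod.group[symmetric]) auto
      also have "\<dots> = (\<Prod>\<alpha>\<in>q ` {1..m}. 1)"
      proof (rule prod.cong[OF refl])
        fix \<alpha> assume "\<alpha> \<in> q ` {1..m}"
        then obtain j0 where j0: "j0 \<in> {1..m}" "\<alpha> = q j0" by blast
        have a0: "1 + T * \<alpha> \<noteq> 0" using nz[OF j0(1)] j0(2) by simp
        have "(\<Prod>j\<in>{j\<in>{1..m}. q j = \<alpha>}. (1 + T * q j) powi H j i) =
            (\<Prod>j\<in>{j\<in>{1..m}. q j = \<alpha>}. (1 + T * \<alpha>) powi H j i)" by (rule prod.cong) auto
        also have "\<dots> = (1 + T * \<alpha>) powi (\<Sum>j\<in>{j\<in>{1..m}. q j = \<alpha>}. H j i)"
          by (rule power_int_sum'[OF a0, symmetric])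
        also have "(\<Sum>j\<in>{j\<in>{1..m}. q j = \<alpha>}. H j i) = 0"
        proof -
          have "(\<Sum>j\<in>{j\<in>{1..m}. q j = \<alpha>}. (of_int (H j i) :: real)) = 0"
            using classes[OF fp genu i, of \<alpha>] unfolding q_def .
          hence "of_int (\<Sum>j\<in>{j\<in>{1..m}. q j = \<alpha>}. H j i) = (0::real)" by simp
          thus ?thesis by linarith
        qed
        finally show "(\<Prod>j\<in>{j\<in>{1..m}. q j = \<alpha>}. (1 + T * q j) powi H j i) = 1" by simp
      qed
      finally show ?thesis by simp
    qed
    finally show ?thesis using u(2) i by simp
  qed
  show "\<forall>i\<in>{0..n}. horn_phi m n H lam v i > 0"
    using segment[OF fp genws wspos _ genv] phiws hv by blast
qed

end
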